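(* For any $\xi>0$, $\epsilon>0$ and $\delta>0$, there exists an $(\epsilon,\delta)$-differentially private (central model) $\left(1+\xi,\ O_\xi\!\left(\frac{m^3}{\epsilon n}\sqrt{\log\frac1\delta}\right)\right)$-approximation algorithm for the rank aggregation problem, where the hidden constant depends only on $\xi$.
   Context: Items are $[m]=\{1,\dots,m\}$; $\mathbb{S}_m$ is the set of rankings (permutations) of $[m]$, $\pi(j)$ being the position of item $j$. The Kendall tau distance is $K(\pi_1,\pi_2)=|\{(i,j):\pi_1(i)<\pi_1(j),\ \pi_2(i)>\pi_2(j)\}|$. An input is a list $\Pi=\{\pi_1,\dots,\pi_n\}$ of $n$ rankings. Define $\bar K(\sigma,\Pi)=\frac1n\sum_k K(\sigma,\pi_k)$ and $\mathrm{OPT}(\Pi)=\min_\sigma\bar K(\sigma,\Pi)$. A randomized algorithm is an $(\alpha,\beta)$-approximation algorithm for rank aggregation if for every input $\Pi$ its output $\sigma$ satisfies $\mathbb{E}[\bar K(\sigma,\Pi)]\le\alpha\,\mathrm{OPT}(\Pi)+\beta$. Two inputs are neighboring if they differ in a single ranking; an algorithm $\mathcal{M}$ is $(\epsilon,\delta)$-DP (central model) if for all neighboring $\Pi,\Pi'$ and all output sets $S$, $\Pr[\mathcal{M}(\Pi)\in S]\le e^{\epsilon}\Pr[\mathcal{M}(\Pi')\in S]+\delta$. *)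

theory Defs
  imports "HOL-Probability.Probability" "HOL-Combinatorics.Permutations"
begin

text \<open>Rankings of the items [m] = {1..m}: permutations pi with pi j the position of item j.\<close>
definition rankings :: "nat \<Rightarrow> (nat \<Rightarrow> nat) set" where
  "rankings m = {p. p permutes {1..m}}"

definition kendall :: "nat \<Rightarrow> (nat \<Rightarrow> nat) \<Rightarrow> (nat \<Rightarrow> nat) \<Rightarrow> nat" where
  "kendall m p1 p2 = card {(i, j). i \<in> {1..m} \<and> j \<in> {1..m} \<and> p1 i < p1 j \<and> p2 i > p2 j}"

definition avg_kendall :: "nat \<Rightarrow> (nat \<Rightarrow> nat) \<Rightarrow> (nat \<Rightarrow> nat) list \<Rightarrow> real" where
  "avg_kendall m s Ps = (\<Sum>k<length Ps. real (kendall m s (Ps ! k))) / real (length Ps)"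

definition OPT :: "nat \<Rightarrow> (nat \<Rightarrow> nat) list \<Rightarrow> real" where
  "OPT m Ps = Min ((\<lambda>s. avg_kendall m s Ps) ` rankings m)"

definition valid_input :: "nat \<Rightarrow> nat \<Rightarrow> (nat \<Rightarrow> nat) list \<Rightarrow> bool" where
  "valid_input m n Ps \<longleftrightarrow> length Ps = n \<and> set Ps \<subseteq> rankings m"

definition neighboring :: "(nat \<Rightarrow> nat) list \<Rightarrow> (nat \<Rightarrow> nat) list \<Rightarrow> bool" where
  "neighboring Ps Qs \<longleftrightarrow> length Ps = length Qs \<and>
     (\<exists>k < length Ps. \<forall>i < length Ps. i \<noteq> k \<longrightarrow> Ps ! i = Qs ! i)"

definition differentially_private ::
  "real \<Rightarrow> real \<Rightarrow> nat \<Rightarrow> nat \<Rightarrow> ((nat \<Rightarrow> nat) list \<Rightarrow> (nat \<Rightarrow> nat) pmf) \<Rightarrow> bool" where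
  "differentially_private eps delta m n M \<longleftrightarrow>
     (\<forall>Ps Qs S. valid_input m n Ps \<longrightarrow> valid_input m n Qs \<longrightarrow> neighboring Ps Qs \<longrightarrow>
        measure_pmf.prob (M Ps) S \<le> exp eps * measure_pmf.prob (M Qs) S + delta)"

definition approximation ::
  "real \<Rightarrow> real \<Rightarrow> nat \<Rightarrow> nat \<Rightarrow> ((nat \<Rightarrow> nat) list \<Rightarrow> (nat \<Rightarrow> nat) pmf) \<Rightarrow> bool" where
  "approximation alpha beta m n M \<longleftrightarrow>
     (\<forall>Ps. valid_input m n Ps \<longrightarrow>
        set_pmf (M Ps) \<subseteq> rankings m \<and>
        measure_pmf.expectation (M Ps) (\<lambda>s. avg_kendall m s Ps) \<le> alpha * OPT m Ps + beta)"

end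

theory Submission
  imports Defs "HOL-Combinatorics.Multiset_Permutations"
begin


fun invl :: "(nat \<Rightarrow> nat) \<Rightarrow> nat list \<Rightarrow> nat" where
  "invl f [] = 0"
| "invl f (x # xs) = length (filter (\<lambda>y. f y < f x) xs) + invl f xs"

lemma invl_card:
  fixes g :: "nat \<Rightarrow> nat"
  assumes "distinct xs" "sorted_wrt (\<lambda>u v. g u < g v) xs"
  shows "invl f xs = card {(u, v). u \<in> set xs \<and> v \<in> set xs \<and> g u < g v \<and> f u > f v}"
  using assms
proof (induction xs)
  case Nil
  then show ?case by simp
next
  case (Cons x xs)
  let ?T = "{(u, v). u \<in> set xs \<and> v \<in> set xs \<and> g u < g v \<and> f u > f v}"
  let ?F = "Pair x ` {v \<in> set xs. f v < f x}"
  have gx: "\<forall>v\<in>set xs. g x < g v" using Cons.prems by simp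
  have eq: "{(u, v). u \<in> set (x#xs) \<and> v \<in> set (x#xs) \<and> g u < g v \<and> f u > f v} = ?F \<union> ?T"
  proof (rule set_eqI, rule iffI)
    fix p assume "p \<in> {(u, v). u \<in> set (x#xs) \<and> v \<in> set (x#xs) \<and> g u < g v \<and> f u > f v}"
    then obtain u v where p: "p = (u, v)" "u \<in> set (x#xs)" "v \<in> set (x#xs)" "g u < g v" "f u > f v" by blast
    show "p \<in> ?F \<union> ?T"
    proof (cases "u = x")
      case True
      then have "v \<noteq> x" using p by (metis less_asym)
      then show ?thesis using p True by auto
    next
      case False
      then have "u \<in> set xs" using p by auto
      then have gxu: "g x < g u" using gx by blast
      have "v \<noteq> x"
      proof
        assume "v = x"
        then have "g u < g x" using p(4) by simp
        then show False using gxu by simp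
      qed
      then show ?thesis using p False by auto
    qed
  next
    fix p assume "p \<in> ?F \<union> ?T"
    then show "p \<in> {(u, v). u \<in> set (x#xs) \<and> v \<in> set (x#xs) \<and> g u < g v \<and> f u > f v}"
      using gx by auto
  qed
  have disj: "?F \<inter> ?T = {}" using Cons.prems by auto
  have "card (?F \<union> ?T) = card ?F + card ?T"
  proof (rule card_Un_disjoint)
    show "finite ?T" by (rule finite_subset[of _ "set xs \<times> set xs"]) auto
  qed (use disj in auto)
  moreover have "card ?F = length (filter (\<lambda>y. f y < f x) xs)"
  proof -
    have "card ?F = card {v \<in> set xs. f v < f x}" by (rule card_image) (auto simp: inj_on_def)
    also have "\<dots> = length (filter (\<lambda>y. f y < f x) xs)"
      using Cons.prems by (simp add: distinct_length_filter Int_def conj_commute)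
    finally show ?thesis .
  qed
  moreover have "invl f xs = card ?T" using Cons by simp
  ultimately show ?case using eq by simp
qed

fun H :: "nat \<Rightarrow> real \<Rightarrow> real" where
  "H 0 t = 1"
| "H (Suc k) t = H k t * (\<Sum>j<Suc k. t ^ j)"

lemma sum_invl:
  assumes "finite A" "inj_on f A" "card A = n"
  shows "(\<Sum>xs\<in>permutations_of_set A. t ^ invl f xs) = H n t"
  using assms
proof (induction n arbitrary: A)
  case 0
  then have "A = {}" by simp
  then show ?case by simp
next
  case (Suc k)
  then have ne: "A \<noteq> {}" by auto
  define c where "c x = card {y \<in> A. f y < f x}" for x
  have inner: "(\<Sum>xs\<in>(\<lambda>xs. x # xs) ` permutations_of_set (A - {x}). t ^ invl f xs) = t ^ c x * H k t"
    if x: "x \<in> A" for x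
  proof -
    have "(\<Sum>xs\<in>(\<lambda>xs. x # xs) ` permutations_of_set (A - {x}). t ^ invl f xs)
        = (\<Sum>ys\<in>permutations_of_set (A - {x}). t ^ invl f (x # ys))"
      by (subst sum.reindex) (auto simp: inj_on_def)
    also have "\<dots> = (\<Sum>ys\<in>permutations_of_set (A - {x}). t ^ c x * t ^ invl f ys)"
    proof (rule sum.cong[OF refl])
      fix ys assume ys: "ys \<in> permutations_of_set (A - {x})"
      have "length (filter (\<lambda>y. f y < f x) ys) = card ({y. f y < f x} \<inter> (A - {x}))"
        using ys by (simp add: distinct_length_filter permutations_of_set_def)
      also have "\<dots> = c x" unfolding c_def by (rule arg_cong[where f=card]) auto
      finally show "t ^ invl f (x # ys) = t ^ c x * t ^ invl f ys" by (simp add: power_add)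
    qed
    also have "\<dots> = t ^ c x * H k t"
      using Suc.IH[of "A - {x}"] Suc.prems x
      by (simp add: sum_distrib_left[symmetric] inj_on_diff)
    finally show ?thesis .
  qed
  have bij: "bij_betw c A {..<Suc k}"
  proof -
    have lt: "c x < c x'" if "x \<in> A" "x' \<in> A" "f x < f x'" for x x'
      unfolding c_def
      by (rule psubset_card_mono) (use that Suc.prems in auto)
    have inj: "inj_on c A"
    proof (rule inj_onI)
      fix x x' assume "x \<in> A" "x' \<in> A" "c x = c x'"
      then show "x = x'" using lt[of x x'] lt[of x' x] Suc.prems(2)
        by (metis inj_on_eq_iff less_irrefl linorder_neqE_nat)
    qed
    have sub: "c ` A \<subseteq> {..<Suc k}"
    proof
      fix z assume "z \<in> c ` A"
      then obtain x where x: "x \<in> A" "z = c x" by auto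
      have "c x < card A" unfolding c_def
        by (rule psubset_card_mono) (use x Suc.prems in auto)
      then show "z \<in> {..<Suc k}" using x Suc.prems by simp
    qed
    have "card (c ` A) = card {..<Suc k}" using inj Suc.prems by (simp add: card_image)
    then have "c ` A = {..<Suc k}" using sub by (intro card_subset_eq) auto
    then show ?thesis using inj by (simp add: bij_betw_def)
  qed
  have "(\<Sum>xs\<in>permutations_of_set A. t ^ invl f xs)
      = (\<Sum>x\<in>A. \<Sum>xs\<in>(\<lambda>xs. x # xs) ` permutations_of_set (A - {x}). t ^ invl f xs)"
    apply (subst permutations_of_set_nonempty[OF ne])
    apply (rule sum.UNION_disjoint)
    using Suc.prems by auto
  also have "\<dots> = (\<Sum>x\<in>A. t ^ c x * H k t)" using inner by simp
  also have "\<dots> = H k t * (\<Sum>x\<in>A. t ^ c x)" by (simp add: sum_distrib_left mult.commute)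
  also have "(\<Sum>x\<in>A. t ^ c x) = (\<Sum>j<Suc k. t ^ j)"
    using sum.reindex_bij_betw[OF bij, of "\<lambda>j. t ^ j"] by simp
  finally show ?case by simp
qed

lemma sum_lessThan_add_split:
  "(\<Sum>j<a + b. f j) = (\<Sum>j<a. f j) + (\<Sum>r<b. f (a + r))" for f :: "nat \<Rightarrow> real"
  by (induction b) (simp_all add: add.assoc)

lemma geom_split:
  fixes s :: real
  assumes "0 \<le> s" "s \<le> 1"
  shows "(\<Sum>j<i * L. s ^ j) \<le> real L * (\<Sum>q<i. (s ^ L) ^ q)"
proof (induction i)
  case 0
  then show ?case by simp
next
  case (Suc i)
  have split: "(\<Sum>j<i * L + L. s ^ j) = (\<Sum>j<i * L. s ^ j) + (\<Sum>r<L. s ^ (i * L + r))"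
    by (rule sum_lessThan_add_split)
  have "(\<Sum>r<L. s ^ (i * L + r)) \<le> (\<Sum>r<L. s ^ (i * L))"
    by (rule sum_mono) (use assms in \<open>auto intro: power_decreasing\<close>)
  also have "\<dots> = real L * (s ^ L) ^ i" by (simp add: power_mult mult.commute)
  finally have "(\<Sum>r<L. s ^ (i * L + r)) \<le> real L * (s ^ L) ^ i" .
  then show ?case using Suc split by (simp add: algebra_simps)
qed

lemma geom_ratio:
  fixes s :: real
  assumes "0 \<le> s" "s \<le> 1" "L \<ge> 1"
  shows "(\<Sum>j<i. s ^ j) \<le> real L * (\<Sum>q<i. (s ^ L) ^ q)"
proof -
  have "(\<Sum>j<i. s ^ j) \<le> (\<Sum>j<i * L. s ^ j)"
    by (rule sum_mono2) (use assms in auto)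
  also have "\<dots> \<le> real L * (\<Sum>q<i. (s ^ L) ^ q)" by (rule geom_split) (use assms in auto)
  finally show ?thesis .
qed

lemma H_nonneg: "0 \<le> t \<Longrightarrow> 0 \<le> H k t"
  by (induction k) (auto intro!: mult_nonneg_nonneg sum_nonneg simp del: sum.lessThan_Suc)

lemma H_ratio:
  fixes s :: real
  assumes "0 \<le> s" "s \<le> 1" "L \<ge> 1"
  shows "H k s \<le> real L ^ k * H k (s ^ L)"
proof (induction k)
  case 0
  then show ?case by simp
next
  case (Suc k)
  have "H (Suc k) s = H k s * (\<Sum>j<Suc k. s ^ j)" by simp
  also have "\<dots> \<le> (real L ^ k * H k (s ^ L)) * (real L * (\<Sum>q<Suc k. (s ^ L) ^ q))"
    by (rule mult_mono[OF Suc geom_ratio]) (use assms in \<open>auto intro!: H_nonneg sum_nonneg mult_nonneg_nonneg simp del: sum.lessThan_Suc\<close>)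
  also have "\<dots> = real L ^ Suc k * H (Suc k) (s ^ L)" by (simp del: sum.lessThan_Suc)
  finally show ?case .
qed



lemma set_upt_Suc1: "set [1..<Suc m] = {1..m}" by auto

definition rank_list :: "nat \<Rightarrow> (nat \<Rightarrow> nat) \<Rightarrow> nat list" where
  "rank_list m s = map (inv s) [1..<Suc m]"

lemma rank_list_perm:
  assumes "s \<in> rankings m"
  shows "rank_list m s \<in> permutations_of_set {1..m}"
proof -
  have p: "s permutes {1..m}" using assms by (simp add: rankings_def)
  then have pi: "inv s permutes {1..m}" by (rule permutes_inv)
  have "set (rank_list m s) = inv s ` {1..m}"
    by (simp only: rank_list_def set_map set_upt_Suc1)
  also have "\<dots> = {1..m}" using pi by (rule permutes_image)
  finally have "set (rank_list m s) = {1..m}" .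
  moreover have "distinct (rank_list m s)"
    unfolding rank_list_def using permutes_inj[OF pi]
    by (simp add: distinct_map inj_on_subset)
  ultimately show ?thesis by (simp add: permutations_of_set_def)
qed

lemma rank_list_inj: "inj_on (rank_list m) (rankings m)"
proof (rule inj_onI)
  fix s t assume s: "s \<in> rankings m" and t: "t \<in> rankings m" and eq: "rank_list m s = rank_list m t"
  have ps: "s permutes {1..m}" and pt: "t permutes {1..m}" using s t by (auto simp: rankings_def)
  have "inv s x = inv t x" for x
  proof (cases "x \<in> {1..m}")
    case True
    have "\<forall>x\<in>set [1..<Suc m]. inv s x = inv t x" using eq unfolding rank_list_def
      by (simp only: map_eq_conv)
    then show ?thesis using True by (simp only: set_upt_Suc1)
  next
    case False
    then show ?thesis using permutes_inv[OF ps] permutes_inv[OF pt]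
      by (simp add: permutes_def)
  qed
  then have "inv s = inv t" by auto
  then show "s = t" using permutes_inv_inv[OF ps] permutes_inv_inv[OF pt] by metis
qed

lemma finite_rankings: "finite (rankings m)"
  unfolding rankings_def by (rule finite_permutations) simp

lemma rank_list_bij: "bij_betw (rank_list m) (rankings m) (permutations_of_set {1..m})"
proof -
  have sub: "rank_list m ` rankings m \<subseteq> permutations_of_set {1..m}"
    using rank_list_perm by auto
  have "card (rank_list m ` rankings m) = card (rankings m)"
    by (rule card_image[OF rank_list_inj])
  also have "\<dots> = fact m" unfolding rankings_def by (rule card_permutations) auto
  also have "\<dots> = card (permutations_of_set {1..m})" by simp
  finally have "rank_list m ` rankings m = permutations_of_set {1..m}"
    using sub by (intro card_subset_eq) auto
  then show ?thesis using rank_list_inj by (simp add: bij_betw_def)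
qed

lemma kendall_invl:
  assumes "s \<in> rankings m"
  shows "kendall m s f = invl f (rank_list m s)"
proof -
  have ps: "s permutes {1..m}" using assms by (simp add: rankings_def)
  have mem: "rank_list m s \<in> permutations_of_set {1..m}" by (rule rank_list_perm[OF assms])
  have sw: "sorted_wrt (\<lambda>u v. s u < s v) (rank_list m s)"
    unfolding rank_list_def sorted_wrt_map
    by (rule sorted_wrt_mono_rel[OF _ sorted_wrt_upt]) (simp add: permutes_inverses(1)[OF ps])
  have "invl f (rank_list m s) = card {(u, v). u \<in> set (rank_list m s) \<and> v \<in> set (rank_list m s) \<and> s u < s v \<and> f u > f v}"
    by (rule invl_card) (use mem sw in \<open>auto simp: permutations_of_set_def\<close>)
  also have "set (rank_list m s) = {1..m}" using mem by (simp add: permutations_of_set_def)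
  finally show ?thesis by (simp add: kendall_def)
qed

lemma sum_kendall_pow:
  fixes t :: real
  assumes "f \<in> rankings m"
  shows "(\<Sum>s\<in>rankings m. t ^ kendall m s f) = H m t"
proof -
  have "(\<Sum>s\<in>rankings m. t ^ kendall m s f) = (\<Sum>s\<in>rankings m. t ^ invl f (rank_list m s))"
    by (rule sum.cong) (simp_all add: kendall_invl)
  also have "\<dots> = (\<Sum>xs\<in>permutations_of_set {1..m}. t ^ invl f xs)"
    by (rule sum.reindex_bij_betw[OF rank_list_bij])
  also have "\<dots> = H m t"
    by (rule sum_invl) (use assms in \<open>auto simp: rankings_def permutes_inj_on\<close>)
  finally show ?thesis .
qed

lemma kendall_sym: "kendall m a b = kendall m b a"
proof -
  have "{(i, j). i \<in> {1..m} \<and> j \<in> {1..m} \<and> b i < b j \<and> a i > a j}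
      = prod.swap ` {(i, j). i \<in> {1..m} \<and> j \<in> {1..m} \<and> a i < a j \<and> b i > b j}"
    by auto
  then show ?thesis unfolding kendall_def
    by (simp add: card_image)
qed

lemma kendall_le: "kendall m a b \<le> m * m"
proof -
  have "kendall m a b \<le> card ({1..m} \<times> {1..m})" unfolding kendall_def
    by (rule card_mono) auto
  then show ?thesis by simp
qed

lemma kendall_tri:
  assumes "b \<in> rankings m"
  shows "kendall m a c \<le> kendall m a b + kendall m b c"
proof -
  have inj: "inj_on b {1..m}" using assms by (auto simp: rankings_def permutes_inj_on)
  let ?D = "\<lambda>x y. {(i, j). i \<in> {1..m} \<and> j \<in> {1..m} \<and> x i < x j \<and> y i > y j}"
  have "?D a c \<subseteq> ?D a b \<union> ?D b c"
  proof
    fix p assume "p \<in> ?D a c"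
    then obtain i j where p: "p = (i, j)" "i \<in> {1..m}" "j \<in> {1..m}" "a i < a j" "c i > c j" by blast
    then have "i \<noteq> j" by auto
    then have "b i \<noteq> b j" using inj p by (metis inj_on_eq_iff)
    then show "p \<in> ?D a b \<union> ?D b c" using p by (cases "b i < b j") auto
  qed
  then have "card (?D a c) \<le> card (?D a b \<union> ?D b c)"
    by (rule card_mono[rotated]) (rule finite_subset[of _ "{1..m} \<times> {1..m}"], auto)
  also have "\<dots> \<le> card (?D a b) + card (?D b c)" by (rule card_Un_le)
  finally show ?thesis unfolding kendall_def .
qed



lemma core_bound:
  fixes S :: "'a \<Rightarrow> real" and K :: "'a \<Rightarrow> nat" and lam n Ov :: real and L m :: nat
  assumes fin: "finite R" and ne: "R \<noteq> {}" and lam: "lam > 0" and L: "L \<ge> 2"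
    and T1: "\<And>s. s \<in> R \<Longrightarrow> n * K s \<le> S s + Ov"
    and T2: "\<And>s. s \<in> R \<Longrightarrow> S s \<le> n * K s + Ov"
    and HR: "(\<Sum>s\<in>R. exp (- lam * n / L) ^ K s) \<le> real L ^ m * (\<Sum>s\<in>R. (exp (- lam * n / L) ^ L) ^ K s)"
  shows "(\<Sum>s\<in>R. S s * exp (- lam * S s)) / (\<Sum>s\<in>R. exp (- lam * S s))
           \<le> Ov * (L + 1) / (L - 1) + m * ln L * L / (lam * (L - 1))"
proof -
  define Z where "Z = (\<Sum>s\<in>R. exp (- lam * S s))"
  have Zpos: "Z > 0" unfolding Z_def using fin ne by (intro sum_pos) auto
  define th where "th = lam * (L - 1) / L"
  define c where "c = lam * Ov * (L + 1) / L + m * ln L"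
  have Lpos: "real L > 0" using L by simp
  have L1pos: "real L - 1 > 0" using L by simp
  have th_pos: "th > 0" unfolding th_def using lam Lpos L1pos by simp
  have pw: "th * S s * exp (- lam * S s) \<le> exp (- lam * S s / L - c) + (c - 1) * exp (- lam * S s)" for s
  proof -
    have "th * S s \<le> exp (th * S s - c) + c - 1" using exp_ge_add_one_self[of "th * S s - c"] by linarith
    then have "th * S s * exp (- lam * S s) \<le> (exp (th * S s - c) + c - 1) * exp (- lam * S s)"
      by (rule mult_right_mono) simp
    also have "\<dots> = exp (th * S s - c - lam * S s) + (c - 1) * exp (- lam * S s)"
      by (simp add: algebra_simps exp_add[symmetric])
    also have "th * S s - c - lam * S s = - lam * S s / L - c"
      unfolding th_def using Lpos by (simp add: field_simps)
    finally show ?thesis .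
  qed
  have sum1: "th * (\<Sum>s\<in>R. S s * exp (- lam * S s)) \<le> exp (- c) * (\<Sum>s\<in>R. exp (- lam * S s / L)) + (c - 1) * Z"
  proof -
    have "th * (\<Sum>s\<in>R. S s * exp (- lam * S s)) = (\<Sum>s\<in>R. th * S s * exp (- lam * S s))"
      by (simp add: sum_distrib_left mult.assoc)
    also have "\<dots> \<le> (\<Sum>s\<in>R. exp (- lam * S s / L - c) + (c - 1) * exp (- lam * S s))"
      by (rule sum_mono) (rule pw)
    also have "\<dots> = (\<Sum>s\<in>R. exp (- c) * exp (- lam * S s / L) + (c - 1) * exp (- lam * S s))"
    proof (rule sum.cong[OF refl])
      fix s
      have "exp (a - c) = exp (- c) * exp a" for a by (simp add: exp_diff exp_minus field_simps)
      then show "exp (- lam * S s / L - c) + (c - 1) * exp (- lam * S s) = exp (- c) * exp (- lam * S s / L) + (c - 1) * exp (- lam * S s)"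
        by simp
    qed
    also have "\<dots> = exp (- c) * (\<Sum>s\<in>R. exp (- lam * S s / L)) + (c - 1) * Z"
      unfolding Z_def by (simp add: sum.distrib sum_distrib_left)
    finally show ?thesis .
  qed
  define s0 where "s0 = exp (- lam * n / L)"
  have pow1: "s0 ^ k = exp (- lam * n * k / L)" for k
    unfolding s0_def exp_of_nat2_mult[symmetric] by (simp add: field_simps)
  have pow2: "(s0 ^ L) ^ k = exp (- lam * n * k)" for k
    unfolding s0_def exp_of_nat2_mult[symmetric] using Lpos by (simp add: field_simps)
  have num: "(\<Sum>s\<in>R. exp (- lam * S s / L)) \<le> exp (lam * Ov / L) * (\<Sum>s\<in>R. s0 ^ K s)"
  proof -
    have "(\<Sum>s\<in>R. exp (- lam * S s / L)) \<le> (\<Sum>s\<in>R. exp (lam * Ov / L) * s0 ^ K s)"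
    proof (rule sum_mono)
      fix s assume s: "s \<in> R"
      have "lam * (n * K s) \<le> lam * (S s + Ov)"
        by (rule mult_left_mono) (use T1[OF s] lam in auto)
      then have "- lam * S s \<le> lam * Ov + (- lam * n * K s)" by (simp add: algebra_simps)
      then have "- lam * S s / L \<le> (lam * Ov + (- lam * n * K s)) / L"
        using Lpos by (metis divide_right_mono less_imp_le minus_divide_left)
      then have "- lam * S s / L \<le> lam * Ov / L + (- lam * n * K s / L)"
        by (simp add: diff_divide_distrib)
      then show "exp (- lam * S s / L) \<le> exp (lam * Ov / L) * s0 ^ K s"
        unfolding pow1 exp_add[symmetric] by simp
    qed
    then show ?thesis by (simp add: sum_distrib_left)
  qed
  have den: "exp (- lam * Ov) * (\<Sum>s\<in>R. (s0 ^ L) ^ K s) \<le> Z"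
  proof -
    have "(\<Sum>s\<in>R. exp (- lam * Ov) * (s0 ^ L) ^ K s) \<le> Z"
      unfolding Z_def
    proof (rule sum_mono)
      fix s assume s: "s \<in> R"
      have "lam * S s \<le> lam * (n * K s + Ov)"
        by (rule mult_left_mono) (use T2[OF s] lam in auto)
      then have "- lam * Ov + (- lam * n * K s) \<le> - lam * S s" by (simp add: algebra_simps)
      then show "exp (- lam * Ov) * (s0 ^ L) ^ K s \<le> exp (- lam * S s)"
        unfolding pow2 exp_add[symmetric] by simp
    qed
    then show ?thesis by (simp add: sum_distrib_left)
  qed
  have HR': "(\<Sum>s\<in>R. s0 ^ K s) \<le> real L ^ m * (\<Sum>s\<in>R. (s0 ^ L) ^ K s)"
    using HR unfolding s0_def .
  have Lm: "real L ^ m = exp (m * ln L)" using Lpos by (simp add: exp_of_nat_mult)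
  have key: "exp (- c) * (\<Sum>s\<in>R. exp (- lam * S s / L)) \<le> Z"
  proof -
    have "exp (- c) * (\<Sum>s\<in>R. exp (- lam * S s / L)) \<le> exp (- c) * (exp (lam * Ov / L) * (real L ^ m * (\<Sum>s\<in>R. (s0 ^ L) ^ K s)))"
      using num HR' by (intro mult_left_mono) (auto intro: order.trans mult_left_mono)
    also have "\<dots> = exp (- c + lam * Ov / L + lam * Ov + m * ln L) * (exp (- lam * Ov) * (\<Sum>s\<in>R. (s0 ^ L) ^ K s))"
      unfolding Lm by (simp add: exp_add[symmetric] algebra_simps)
    also have "- c + lam * Ov / L + lam * Ov + m * ln L = 0"
      unfolding c_def using Lpos by (simp add: field_simps)
    finally show ?thesis using den by simp
  qed
  have "th * (\<Sum>s\<in>R. S s * exp (- lam * S s)) \<le> c * Z" using sum1 key by (simp add: algebra_simps)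
  then have "(\<Sum>s\<in>R. S s * exp (- lam * S s)) / Z \<le> c / th"
    using Zpos th_pos by (simp add: field_simps)
  also have "c / th = Ov * (L + 1) / (L - 1) + m * ln L * L / (lam * (L - 1))"
  proof -
    have ne1: "real L - 1 \<noteq> 0" and ne2: "real L \<noteq> 0" and ne3: "lam \<noteq> 0"
      using Lpos L1pos lam by auto
    have "th * (Ov * (L + 1) / (L - 1) + m * ln L * L / (lam * (L - 1)))
        = lam * (L - 1) / L * (Ov * (L + 1) / (L - 1)) + lam * (L - 1) / L * (m * ln L * L / (lam * (L - 1)))"
      unfolding th_def by (simp add: distrib_left)
    also have "lam * (L - 1) / L * (Ov * (L + 1) / (L - 1)) = lam * Ov * (L + 1) / L"
      using ne1 ne2 by (simp add: field_simps)
    also have "lam * (L - 1) / L * (m * ln L * L / (lam * (L - 1))) = m * ln L"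
      using ne1 ne2 ne3 by (simp add: field_simps)
    finally have "th * (Ov * (L + 1) / (L - 1) + m * ln L * L / (lam * (L - 1))) = c"
      unfolding c_def .
    then show ?thesis using th_pos by (simp add: field_simps)
  qed
  finally show ?thesis unfolding Z_def .
qed



definition Ssc :: "nat \<Rightarrow> (nat \<Rightarrow> nat) list \<Rightarrow> (nat \<Rightarrow> nat) \<Rightarrow> real" where
  "Ssc m Ps s = (\<Sum>k<length Ps. real (kendall m s (Ps ! k)))"

definition lamb :: "real \<Rightarrow> nat \<Rightarrow> real" where
  "lamb e m = e / (2 * (real m ^ 2 + 1))"

definition wt :: "real \<Rightarrow> nat \<Rightarrow> (nat \<Rightarrow> nat) list \<Rightarrow> (nat \<Rightarrow> nat) \<Rightarrow> real" where
  "wt e m Ps s = exp (- lamb e m * Ssc m Ps s)"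

definition Zt :: "real \<Rightarrow> nat \<Rightarrow> (nat \<Rightarrow> nat) list \<Rightarrow> real" where
  "Zt e m Ps = (\<Sum>s\<in>rankings m. wt e m Ps s)"

definition opt_r :: "nat \<Rightarrow> (nat \<Rightarrow> nat) list \<Rightarrow> (nat \<Rightarrow> nat)" where
  "opt_r m Ps = (SOME s. s \<in> rankings m \<and> (\<forall>t\<in>rankings m. Ssc m Ps s \<le> Ssc m Ps t))"

definition gfun :: "real \<Rightarrow> real \<Rightarrow> nat \<Rightarrow> (nat \<Rightarrow> nat) list \<Rightarrow> (nat \<Rightarrow> nat) \<Rightarrow> real" where
  "gfun e d m Ps s = (if s \<in> rankings m then d * (if s = opt_r m Ps then 1 else 0) + (1 - d) * (wt e m Ps s / Zt e m Ps) else 0)"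

definition mech :: "real \<Rightarrow> real \<Rightarrow> nat \<Rightarrow> (nat \<Rightarrow> nat) list \<Rightarrow> (nat \<Rightarrow> nat) pmf" where
  "mech e d m Ps = embed_pmf (gfun e d m Ps)"

lemma rankings_ne: "id \<in> rankings m"
  by (simp add: rankings_def permutes_id)

lemma opt_r: "opt_r m Ps \<in> rankings m \<and> (\<forall>t\<in>rankings m. Ssc m Ps (opt_r m Ps) \<le> Ssc m Ps t)"
proof -
  let ?A = "Ssc m Ps ` rankings m"
  have fin: "finite ?A" using finite_rankings by simp
  have ne: "?A \<noteq> {}" using rankings_ne by auto
  obtain s where s: "s \<in> rankings m" "Ssc m Ps s = Min ?A" using Min_in[OF fin ne] by auto
  have "\<forall>t\<in>rankings m. Ssc m Ps s \<le> Ssc m Ps t" using s fin by simp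
  then have "\<exists>s. s \<in> rankings m \<and> (\<forall>t\<in>rankings m. Ssc m Ps s \<le> Ssc m Ps t)" using s by blast
  then show ?thesis unfolding opt_r_def by (rule someI_ex)
qed

lemma Zt_pos: "Zt e m Ps > 0"
  unfolding Zt_def wt_def using finite_rankings rankings_ne by (intro sum_pos) auto

lemma gfun_nonneg: "0 \<le> d \<Longrightarrow> d \<le> 1 \<Longrightarrow> 0 \<le> gfun e d m Ps s"
  unfolding gfun_def wt_def using Zt_pos[of e m Ps] by auto

lemma gfun_sum: "(\<Sum>s\<in>rankings m. gfun e d m Ps s) = 1"
proof -
  have "(\<Sum>s\<in>rankings m. gfun e d m Ps s)
      = (\<Sum>s\<in>rankings m. d * (if s = opt_r m Ps then 1 else 0)) + (\<Sum>s\<in>rankings m. (1 - d) * (wt e m Ps s / Zt e m Ps))"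
    unfolding gfun_def by (simp add: sum.distrib)
  also have "(\<Sum>s\<in>rankings m. d * (if s = opt_r m Ps then 1 else 0)) = d"
  proof -
    have "(\<Sum>s\<in>rankings m. d * (if s = opt_r m Ps then 1 else 0)) = d * (\<Sum>s\<in>rankings m. (if s = opt_r m Ps then 1 else 0))"
      by (rule sum_distrib_left[symmetric])
    also have "(\<Sum>s\<in>rankings m. (if s = opt_r m Ps then 1 else 0)) = (1::real)"
      using opt_r[of m Ps] finite_rankings[of m] by (subst sum.delta) auto
    finally show ?thesis by simp
  qed
  also have "(\<Sum>s\<in>rankings m. (1 - d) * (wt e m Ps s / Zt e m Ps)) = (1 - d) * (Zt e m Ps / Zt e m Ps)"
    by (simp add: sum_distrib_left[symmetric] sum_divide_distrib[symmetric] Zt_def)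
  also have "\<dots> = 1 - d" using Zt_pos[of e m Ps] by simp
  finally show ?thesis by simp
qed

lemma pmf_mech:
  assumes "0 \<le> d" "d \<le> 1"
  shows "pmf (mech e d m Ps) s = gfun e d m Ps s"
proof -
  have nn: "\<And>x. 0 \<le> gfun e d m Ps x" using gfun_nonneg assms by blast
  have "(\<integral>\<^sup>+x. ennreal (gfun e d m Ps x) \<partial>count_space UNIV) = (\<Sum>x\<in>rankings m. ennreal (gfun e d m Ps x))"
    by (rule nn_integral_count_space') (auto simp: finite_rankings gfun_def)
  also have "\<dots> = ennreal (\<Sum>x\<in>rankings m. gfun e d m Ps x)" using nn by simp
  also have "\<dots> = 1" by (simp add: gfun_sum)
  finally have "(\<integral>\<^sup>+x. ennreal (gfun e d m Ps x) \<partial>count_space UNIV) = 1" .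
  then show ?thesis unfolding mech_def using nn by (simp add: pmf_embed_pmf)
qed

lemma set_mech:
  assumes "0 \<le> d" "d \<le> 1"
  shows "set_pmf (mech e d m Ps) \<subseteq> rankings m"
  using pmf_mech[OF assms] by (auto simp: set_pmf_eq gfun_def)

lemma prob_mech:
  assumes "0 \<le> d" "d \<le> 1"
  shows "measure_pmf.prob (mech e d m Ps) S = (\<Sum>s\<in>S \<inter> rankings m. gfun e d m Ps s)"
proof -
  let ?p = "mech e d m Ps"
  have "measure_pmf.prob ?p S = measure_pmf.prob ?p (S \<inter> set_pmf ?p)" by (simp add: measure_Int_set_pmf)
  also have "\<dots> \<le> measure_pmf.prob ?p (S \<inter> rankings m)"
    using set_mech[OF assms] by (intro measure_pmf.finite_measure_mono) auto
  finally have le: "measure_pmf.prob ?p S \<le> measure_pmf.prob ?p (S \<inter> rankings m)" .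
  have "measure_pmf.prob ?p (S \<inter> rankings m) \<le> measure_pmf.prob ?p S"
    by (intro measure_pmf.finite_measure_mono) auto
  with le have "measure_pmf.prob ?p S = measure_pmf.prob ?p (S \<inter> rankings m)" by simp
  also have "\<dots> = (\<Sum>s\<in>S \<inter> rankings m. pmf ?p s)"
    by (rule measure_measure_pmf_finite) (simp add: finite_rankings)
  also have "\<dots> = (\<Sum>s\<in>S \<inter> rankings m. gfun e d m Ps s)" by (simp add: pmf_mech[OF assms])
  finally show ?thesis .
qed



lemma Ssc_sens:
  assumes len: "length Ps = length Qs" and k0: "k0 < length Ps"
    and eq: "\<forall>i<length Ps. i \<noteq> k0 \<longrightarrow> Ps ! i = Qs ! i"
  shows "Ssc m Ps s \<le> Ssc m Qs s + real (m * m)"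
proof -
  have fin: "finite {..<length Ps}" by simp
  have k0in: "k0 \<in> {..<length Ps}" using k0 by simp
  have "Ssc m Ps s = real (kendall m s (Ps ! k0)) + (\<Sum>k\<in>{..<length Ps} - {k0}. real (kendall m s (Ps ! k)))"
    unfolding Ssc_def by (rule sum.remove[OF fin k0in])
  also have "(\<Sum>k\<in>{..<length Ps} - {k0}. real (kendall m s (Ps ! k))) = (\<Sum>k\<in>{..<length Ps} - {k0}. real (kendall m s (Qs ! k)))"
    by (rule sum.cong) (use eq in auto)
  also have "real (kendall m s (Ps ! k0)) \<le> real (m * m)" by (simp only: of_nat_le_iff kendall_le)
  finally have "Ssc m Ps s \<le> real (m * m) + (\<Sum>k\<in>{..<length Ps} - {k0}. real (kendall m s (Qs ! k)))" by simp
  moreover have "Ssc m Qs s = real (kendall m s (Qs ! k0)) + (\<Sum>k\<in>{..<length Ps} - {k0}. real (kendall m s (Qs ! k)))"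
    unfolding Ssc_def len[symmetric] by (rule sum.remove[OF fin k0in])
  ultimately show ?thesis by simp
qed

lemma wt_sens:
  assumes "e > 0" and sens: "Ssc m Ps s \<le> Ssc m Qs s + real (m * m)"
  shows "wt e m Qs s \<le> exp (e / 2) * wt e m Ps s"
proof -
  have "2 * (real m ^ 2 + 1) > 0" by (intro mult_pos_pos) (simp_all add: add_nonneg_pos)
  then have lpos: "lamb e m > 0" unfolding lamb_def using assms by (simp only: divide_pos_pos)
  have "lamb e m * real (m * m) \<le> e / 2"
  proof -
    have "lamb e m * real (m * m) = e / 2 * (real m ^ 2 / (real m ^ 2 + 1))"
      unfolding lamb_def by (simp add: power2_eq_square field_simps)
    also have "\<dots> \<le> e / 2 * 1"
    proof (intro mult_left_mono)
      have "real m ^ 2 + 1 > 0" by (simp add: add_nonneg_pos)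
      then show "real m ^ 2 / (real m ^ 2 + 1) \<le> 1" by (simp add: divide_le_eq_1)
    qed (use assms in simp)
    finally show ?thesis by simp
  qed
  moreover have "lamb e m * Ssc m Ps s \<le> lamb e m * (Ssc m Qs s + real (m * m))"
    by (rule mult_left_mono[OF sens]) (use lpos in simp)
  ultimately have "- lamb e m * Ssc m Qs s \<le> e / 2 + (- lamb e m * Ssc m Ps s)"
    by (simp add: algebra_simps)
  then show ?thesis unfolding wt_def exp_add[symmetric] by simp
qed

lemma mech_dp:
  assumes e: "e > 0" and d: "0 \<le> d" "d \<le> 1"
  shows "differentially_private e d m n (mech e d m)"
  unfolding differentially_private_def
proof (intro allI impI)
  fix Ps Qs S
  assume vP: "valid_input m n Ps" and vQ: "valid_input m n Qs" and nb: "neighboring Ps Qs"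
  obtain k0 where len: "length Ps = length Qs" and k0: "k0 < length Ps"
    and eq: "\<forall>i<length Ps. i \<noteq> k0 \<longrightarrow> Ps ! i = Qs ! i"
    using nb unfolding neighboring_def by blast
  have eq': "\<forall>i<length Qs. i \<noteq> k0 \<longrightarrow> Qs ! i = Ps ! i" using eq len by auto
  have wPQ: "wt e m Ps s \<le> exp (e / 2) * wt e m Qs s" for s
    by (rule wt_sens[OF e Ssc_sens[OF len[symmetric] _ eq']]) (use k0 len in simp)
  have wQP: "wt e m Qs s \<le> exp (e / 2) * wt e m Ps s" for s
    by (rule wt_sens[OF e Ssc_sens[OF len k0 eq]])
  have ZQ: "Zt e m Qs \<le> exp (e / 2) * Zt e m Ps"
    unfolding Zt_def sum_distrib_left by (rule sum_mono) (rule wQP)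
  have ZP: "Zt e m Ps > 0" and ZQp: "Zt e m Qs > 0" by (rule Zt_pos)+
  have ratio: "wt e m Ps s / Zt e m Ps \<le> exp e * (wt e m Qs s / Zt e m Qs)" for s
  proof -
    have wpos: "0 \<le> wt e m Qs s" unfolding wt_def by simp
    have "wt e m Ps s / Zt e m Ps \<le> exp (e / 2) * wt e m Qs s / Zt e m Ps"
      using wPQ[of s] ZP by (simp add: divide_right_mono)
    also have "\<dots> \<le> exp (e / 2) * wt e m Qs s / (Zt e m Qs / exp (e / 2))"
    proof (rule divide_left_mono)
      show "Zt e m Qs / exp (e / 2) \<le> Zt e m Ps" using ZQ by (simp add: field_simps)
      show "0 < Zt e m Ps * (Zt e m Qs / exp (e / 2))" using ZP ZQp by simp
    qed (use wpos in simp)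
    also have "\<dots> = (exp (e / 2) * exp (e / 2)) * (wt e m Qs s / Zt e m Qs)"
      by (simp add: field_simps)
    also have "exp (e / 2) * exp (e / 2) = exp e" by (simp add: exp_add[symmetric])
    finally show ?thesis .
  qed
  let ?A = "S \<inter> rankings m"
  have finA: "finite ?A" using finite_rankings by simp
  let ?X = "(\<Sum>s\<in>?A. (if s = opt_r m Ps then 1 else 0)) :: real"
  let ?Y = "\<Sum>s\<in>?A. wt e m Ps s / Zt e m Ps"
  let ?W = "\<Sum>s\<in>?A. wt e m Qs s / Zt e m Qs"
  let ?G = "\<Sum>s\<in>?A. gfun e d m Qs s"
  have P: "measure_pmf.prob (mech e d m Ps) S = d * ?X + (1 - d) * ?Y"
    unfolding prob_mech[OF d] gfun_def by (simp add: sum.distrib sum_distrib_left)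
  have X: "?X \<le> 1"
    using finA by (subst sum.delta) auto
  have Y: "?Y \<le> exp e * ?W"
    unfolding sum_distrib_left by (rule sum_mono) (rule ratio)
  have W: "(1 - d) * (exp e * ?W) \<le> exp e * ?G"
  proof -
    have "(1 - d) * ?W \<le> ?G"
      unfolding sum_distrib_left
      by (rule sum_mono) (use d in \<open>auto simp: gfun_def\<close>)
    then have "exp e * ((1 - d) * ?W) \<le> exp e * ?G"
      by (rule mult_left_mono) simp
    then show ?thesis by (metis mult.left_commute)
  qed
  have G: "?G = measure_pmf.prob (mech e d m Qs) S" by (rule prob_mech[OF d, symmetric])
  have dX: "d * ?X \<le> d" using mult_left_mono[OF X d(1)] by simp
  have dY: "(1 - d) * ?Y \<le> (1 - d) * (exp e * ?W)" by (rule mult_left_mono[OF Y]) (use d in simp)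
  show "measure_pmf.prob (mech e d m Ps) S \<le> exp e * measure_pmf.prob (mech e d m Qs) S + d"
  proof -
    have W': "(1 - d) * (exp e * ?W) \<le> exp e * measure_pmf.prob (mech e d m Qs) S" using W G by simp
    show ?thesis using P dX dY W' by linarith
  qed
qed



lemma avg_Ssc: "avg_kendall m s Ps = Ssc m Ps s / real (length Ps)"
  unfolding avg_kendall_def Ssc_def ..

lemma OPT_eq:
  assumes "length Ps \<ge> 1"
  shows "OPT m Ps = Ssc m Ps (opt_r m Ps) / real (length Ps)"
  unfolding OPT_def
proof (rule Min_eqI)
  show "finite ((\<lambda>s. avg_kendall m s Ps) ` rankings m)" using finite_rankings by simp
  fix y assume "y \<in> (\<lambda>s. avg_kendall m s Ps) ` rankings m"
  then obtain t where t: "t \<in> rankings m" "y = avg_kendall m t Ps" by auto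
  have "Ssc m Ps (opt_r m Ps) \<le> Ssc m Ps t" using opt_r t by blast
  then show "Ssc m Ps (opt_r m Ps) / real (length Ps) \<le> y"
    using t assms by (simp add: avg_Ssc divide_right_mono)
next
  show "Ssc m Ps (opt_r m Ps) / real (length Ps) \<in> (\<lambda>s. avg_kendall m s Ps) ` rankings m"
    using opt_r by (auto simp: avg_Ssc)
qed

lemma mech_util:
  fixes L :: nat
  assumes v: "valid_input m n Ps" and n: "n \<ge> 1" and L: "L \<ge> 2" and e: "e > 0"
    and d: "0 \<le> d" "d \<le> 1"
  shows "measure_pmf.expectation (mech e d m Ps) (\<lambda>s. avg_kendall m s Ps)
     \<le> d * OPT m Ps + (1 - d) * (OPT m Ps * (L + 1) / (L - 1) + (m * ln L * L / (lamb e m * (L - 1))) / n)"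
proof -
  let ?R = "rankings m"
  let ?o = "opt_r m Ps"
  let ?S = "Ssc m Ps"
  let ?lam = "lamb e m"
  have len: "length Ps = n" and sub: "set Ps \<subseteq> ?R" using v by (auto simp: valid_input_def)
  have Pk: "Ps ! k \<in> ?R" if "k < n" for k using sub that len by auto
  have oR: "?o \<in> ?R" using opt_r by blast
  have lpos: "?lam > 0"
  proof -
    have "2 * (real m ^ 2 + 1) > 0" by (intro mult_pos_pos) (simp_all add: add_nonneg_pos)
    then show ?thesis unfolding lamb_def using e by (simp only: divide_pos_pos)
  qed
  have npos: "real n > 0" using n by simp
  have OPTe: "OPT m Ps = ?S ?o / n" using OPT_eq[of Ps m] len n by simp
  have T1: "real n * real (kendall m s ?o) \<le> ?S s + ?S ?o" if s: "s \<in> ?R" for s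
  proof -
    have "real n * real (kendall m s ?o) = (\<Sum>k<n. real (kendall m s ?o))" by simp
    also have "\<dots> \<le> (\<Sum>k<n. real (kendall m s (Ps ! k)) + real (kendall m ?o (Ps ! k)))"
    proof (rule sum_mono)
      fix k assume "k \<in> {..<n}"
      then have "kendall m s ?o \<le> kendall m s (Ps ! k) + kendall m (Ps ! k) ?o"
        using Pk by (intro kendall_tri) auto
      then show "real (kendall m s ?o) \<le> real (kendall m s (Ps ! k)) + real (kendall m ?o (Ps ! k))"
        by (simp add: kendall_sym[of m "Ps ! k" ?o])
    qed
    also have "\<dots> = ?S s + ?S ?o" unfolding Ssc_def len by (simp add: sum.distrib)
    finally show ?thesis .
  qed
  have T2: "?S s \<le> real n * real (kendall m s ?o) + ?S ?o" if s: "s \<in> ?R" for s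
  proof -
    have "?S s \<le> (\<Sum>k<n. real (kendall m s ?o) + real (kendall m ?o (Ps ! k)))"
      unfolding Ssc_def len
    proof (rule sum_mono)
      fix k assume "k \<in> {..<n}"
      have "kendall m s (Ps ! k) \<le> kendall m s ?o + kendall m ?o (Ps ! k)"
        using oR by (intro kendall_tri) auto
      then show "real (kendall m s (Ps ! k)) \<le> real (kendall m s ?o) + real (kendall m ?o (Ps ! k))"
        by simp
    qed
    also have "\<dots> = real n * real (kendall m s ?o) + ?S ?o" unfolding Ssc_def len by (simp add: sum.distrib)
    finally show ?thesis .
  qed
  define s0 where "s0 = exp (- ?lam * real n / real L)"
  have s0: "0 \<le> s0" "s0 \<le> 1" unfolding s0_def using lpos npos L by auto
  have HR: "(\<Sum>s\<in>?R. s0 ^ kendall m s ?o) \<le> real L ^ m * (\<Sum>s\<in>?R. (s0 ^ L) ^ kendall m s ?o)"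
    unfolding sum_kendall_pow[OF oR] using H_ratio[OF s0] L by simp
  have core: "(\<Sum>s\<in>?R. ?S s * exp (- ?lam * ?S s)) / (\<Sum>s\<in>?R. exp (- ?lam * ?S s))
           \<le> ?S ?o * (L + 1) / (L - 1) + m * ln L * L / (?lam * (L - 1))"
    by (rule core_bound[where K = "\<lambda>s. kendall m s ?o" and n = "real n"])
       (use finite_rankings rankings_ne[of m] lpos L T1 T2 HR in \<open>auto simp: s0_def\<close>)
  have E: "measure_pmf.expectation (mech e d m Ps) (\<lambda>s. avg_kendall m s Ps)
      = (\<Sum>s\<in>?R. avg_kendall m s Ps * gfun e d m Ps s)"
    using integral_measure_pmf_real[of ?R "mech e d m Ps" "\<lambda>s. avg_kendall m s Ps"]
      set_mech[OF d] finite_rankings pmf_mech[OF d] by auto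
  also have "\<dots> = d * (\<Sum>s\<in>?R. avg_kendall m s Ps * (if s = ?o then 1 else 0))
       + (1 - d) * (\<Sum>s\<in>?R. avg_kendall m s Ps * (wt e m Ps s / Zt e m Ps))"
    unfolding gfun_def by (simp add: sum.distrib sum_distrib_left algebra_simps)
  also have "(\<Sum>s\<in>?R. avg_kendall m s Ps * (if s = ?o then 1 else 0)) = avg_kendall m ?o Ps"
  proof -
    have "(\<Sum>s\<in>?R. avg_kendall m s Ps * (if s = ?o then 1 else 0)) = (\<Sum>s\<in>?R. if s = ?o then avg_kendall m s Ps else 0)"
      by (rule sum.cong) auto
    also have "\<dots> = avg_kendall m ?o Ps" using oR finite_rankings[of m] by (subst sum.delta) auto
    finally show ?thesis .
  qed
  also have "avg_kendall m ?o Ps = OPT m Ps" using OPTe len by (simp add: avg_Ssc)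
  also have "(\<Sum>s\<in>?R. avg_kendall m s Ps * (wt e m Ps s / Zt e m Ps))
      = ((\<Sum>s\<in>?R. ?S s * exp (- ?lam * ?S s)) / (\<Sum>s\<in>?R. exp (- ?lam * ?S s))) / n"
    unfolding avg_Ssc len wt_def Zt_def
    by (simp add: sum_divide_distrib[symmetric] sum_distrib_left[symmetric] field_simps)
  also have "\<dots> \<le> OPT m Ps * (L + 1) / (L - 1) + (m * ln L * L / (?lam * (L - 1))) / n"
  proof -
    have So: "?S ?o = OPT m Ps * n" using OPTe npos by simp
    have "((\<Sum>s\<in>?R. ?S s * exp (- ?lam * ?S s)) / (\<Sum>s\<in>?R. exp (- ?lam * ?S s))) \<le> (OPT m Ps * n) * (L + 1) / (L - 1) + m * ln L * L / (?lam * (L - 1))"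
      using core unfolding So .
    then have "((\<Sum>s\<in>?R. ?S s * exp (- ?lam * ?S s)) / (\<Sum>s\<in>?R. exp (- ?lam * ?S s))) / n \<le> ((OPT m Ps * n) * (L + 1) / (L - 1) + m * ln L * L / (?lam * (L - 1))) / n"
      using npos by (intro divide_right_mono) auto
    also have "((OPT m Ps * n) * (L + 1) / (L - 1) + m * ln L * L / (?lam * (L - 1))) / n
       = OPT m Ps * (L + 1) / (L - 1) + (m * ln L * L / (?lam * (L - 1))) / n"
      using npos by (simp add: add_divide_distrib)
    finally show ?thesis .
  qed
  finally show ?thesis using d by (simp add: mult_left_mono)
qed



lemma Qbound:
  fixes L m n :: nat
  assumes e: "e > 0" and L: "L \<ge> 2" and n: "n \<ge> 1"
  shows "(m * ln L * L / (lamb e m * (L - 1))) / n \<le> 4 * L * ln L * (real m ^ 3 / (e * real n))"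
proof -
  have L1: "real (L - 1) = real L - 1" using L by (simp add: of_nat_diff)
  have L1ge: "real L - 1 \<ge> 1" using L by simp
  have lnL: "ln (real L) \<ge> 0" using L by simp
  have npos: "real n > 0" using n by simp
  have mm: "real m * (real m ^ 2 + 1) \<le> 2 * real m ^ 3"
  proof (cases "m = 0")
    case False
    then have "real m \<ge> 1" by simp
    then have "real m ^ 2 \<ge> 1" by simp
    then have "real m ^ 2 + 1 \<le> 2 * real m ^ 2" by simp
    then have "real m * (real m ^ 2 + 1) \<le> real m * (2 * real m ^ 2)" by (intro mult_left_mono) auto
    then show ?thesis by (simp add: power3_eq_cube power2_eq_square algebra_simps)
  qed simp
  have eq: "(m * ln L * L / (lamb e m * (L - 1))) / n = (2 * (real m * (real m ^ 2 + 1)) * real L * ln L) / (e * real n * (real L - 1))"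
    unfolding lamb_def using e L1ge npos
    by (simp add: L1 field_simps)
  also have "\<dots> \<le> (2 * (2 * real m ^ 3) * real L * ln L) / (e * real n * 1)"
  proof (rule frac_le)
    show "0 \<le> 2 * (2 * real m ^ 3) * real L * ln L" using lnL by simp
    show "2 * (real m * (real m ^ 2 + 1)) * real L * ln (real L) \<le> 2 * (2 * real m ^ 3) * real L * ln L"
      using mm lnL by (intro mult_right_mono) auto
    show "0 < e * real n * 1" using e npos by simp
    show "e * real n * 1 \<le> e * real n * (real L - 1)" using e npos L1ge by (intro mult_left_mono) auto
  qed
  also have "\<dots> = 4 * L * ln L * (real m ^ 3 / (e * real n))" by (simp add: field_simps)
  finally show ?thesis .
qed

lemma ratio_bound:
  fixes L :: nat and x :: real
  assumes xi: "\<xi> > 0" and Ld: "L = nat \<lceil>2 / \<xi>\<rceil> + 1" and x: "x \<ge> 0"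
  shows "x * (L + 1) / (L - 1) \<le> (1 + \<xi>) * x"
proof -
  have c: "real_of_int \<lceil>2 / \<xi>\<rceil> \<ge> 2 / \<xi>" by (rule le_of_int_ceiling)
  have pos: "2 / \<xi> > 0" using xi by simp
  then have cpos: "\<lceil>2 / \<xi>\<rceil> \<ge> 1" by (simp add: one_le_ceiling)  
  have L1: "real (L - 1) = real_of_int \<lceil>2 / \<xi>\<rceil>" using cpos Ld by simp
  have L1': "real L - 1 = real_of_int \<lceil>2 / \<xi>\<rceil>" using cpos Ld by simp
  have Lp: "real (L + 1) = real L + 1" by simp
  have gt: "real L - 1 \<ge> 2 / \<xi>" using c L1' by simp
  have gt0: "real L - 1 > 0" using gt pos by linarith
  have "real L + 1 \<le> (1 + \<xi>) * (real L - 1)"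
  proof -
    have "\<xi> * (real L - 1) \<ge> \<xi> * (2 / \<xi>)" using gt xi by (intro mult_left_mono) auto
    then have "\<xi> * (real L - 1) \<ge> 2" using xi by simp
    then show ?thesis by (simp add: algebra_simps)
  qed
  then have "(real L + 1) / (real L - 1) \<le> 1 + \<xi>" using gt0 by (simp add: divide_le_eq)
  then have "x * ((real L + 1) / (real L - 1)) \<le> x * (1 + \<xi>)" using x by (rule mult_left_mono)
  then show ?thesis using Ld cpos L1 by (simp add: algebra_simps of_nat_diff)
qed

lemma one_minus_le_sqrt:
  fixes d :: real
  assumes "0 < d" "d < 1"
  shows "1 - d \<le> sqrt (ln (1 / d))"
proof -
  have "ln d \<le> d - 1" using assms by (intro ln_le_minus_one) auto
  then have l: "1 - d \<le> ln (1 / d)" using assms by (simp add: ln_div)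
  have "1 - d \<le> sqrt (1 - d)"
  proof -
    have a: "0 \<le> 1 - d" "1 - d \<le> 1" using assms by auto
    have "sqrt (1 - d) \<le> 1" using a by simp
    have "1 - d = sqrt (1 - d) * sqrt (1 - d)" using a(1) by (metis real_sqrt_mult_self abs_of_nonneg)
    also have "\<dots> \<le> sqrt (1 - d) * 1" using \<open>sqrt (1 - d) \<le> 1\<close> a by (intro mult_left_mono) auto
    finally show ?thesis by simp
  qed
  also have "\<dots> \<le> sqrt (ln (1 / d))" using l by simp
  finally show ?thesis .
qed

theorem corollary2:
  fixes \<xi> :: real
  assumes "\<xi> > 0"
  shows "\<exists>C :: real. \<forall>(\<epsilon>::real) (\<delta>::real). \<epsilon> > 0 \<longrightarrow> 0 < \<delta> \<longrightarrow> \<delta> < 1 \<longrightarrow>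
    (\<exists>M :: nat \<Rightarrow> (nat \<Rightarrow> nat) list \<Rightarrow> (nat \<Rightarrow> nat) pmf.
       \<forall>m n. n \<ge> 1 \<longrightarrow>
         differentially_private \<epsilon> \<delta> m n (M m) \<and>
         approximation (1 + \<xi>) (C * (real m ^ 3 / (\<epsilon> * real n)) * sqrt (ln (1 / \<delta>))) m n (M m))"
proof -
  define L :: nat where "L = nat \<lceil>2 / \<xi>\<rceil> + 1"
  have pos: "2 / \<xi> > 0" using assms by simp
  then have cpos: "\<lceil>2 / \<xi>\<rceil> \<ge> 1" by (simp add: one_le_ceiling)
  then have L2: "L \<ge> 2" unfolding L_def by linarith
  define C where "C = 4 * L * ln L"
  have C0: "C \<ge> 0" unfolding C_def using L2 by simp
  show ?thesis
  proof (intro exI allI impI)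
    fix e d :: real
    assume e: "e > 0" and d0: "0 < d" and dlt: "d < 1"
    have d: "0 \<le> d" "d \<le> 1" using d0 dlt by linarith+
    fix m n :: nat
    assume n: "n \<ge> 1"
    show "differentially_private e d m n (mech e d m) \<and>
         approximation (1 + \<xi>) (C * (real m ^ 3 / (e * real n)) * sqrt (ln (1 / d))) m n (mech e d m)"
    proof
      show "differentially_private e d m n (mech e d m)" by (rule mech_dp[OF e d])
      show "approximation (1 + \<xi>) (C * (real m ^ 3 / (e * real n)) * sqrt (ln (1 / d))) m n (mech e d m)"
        unfolding approximation_def
      proof (intro allI impI conjI)
        fix Ps assume v: "valid_input m n Ps"
        show "set_pmf (mech e d m Ps) \<subseteq> rankings m" by (rule set_mech[OF d])
        have len: "length Ps = n" using v by (simp add: valid_input_def)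
        have OPT0: "OPT m Ps \<ge> 0"
          using OPT_eq[of Ps m] len n by (simp add: Ssc_def sum_nonneg)
        let ?B = "C * (real m ^ 3 / (e * real n))"
        have B0: "?B \<ge> 0" using C0 e by simp
        have U: "measure_pmf.expectation (mech e d m Ps) (\<lambda>s. avg_kendall m s Ps)
           \<le> d * OPT m Ps + (1 - d) * (OPT m Ps * (L + 1) / (L - 1) + (m * ln L * L / (lamb e m * (L - 1))) / n)"
          by (rule mech_util[OF v n L2 e d])
        have A: "OPT m Ps * (L + 1) / (L - 1) \<le> (1 + \<xi>) * OPT m Ps"
          by (rule ratio_bound[OF assms L_def OPT0])
        have Q: "(m * ln L * L / (lamb e m * (L - 1))) / n \<le> ?B"
          unfolding C_def by (rule Qbound[OF e L2 n])
        have F2: "(1 - d) * (OPT m Ps * (L + 1) / (L - 1) + (m * ln L * L / (lamb e m * (L - 1))) / n)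
            \<le> (1 - d) * ((1 + \<xi>) * OPT m Ps + ?B)"
          using A Q d by (intro mult_left_mono) auto
        have F3: "(1 - d) * ((1 + \<xi>) * OPT m Ps + ?B) = (1 + \<xi>) * OPT m Ps + (1 - d) * ?B - d * OPT m Ps - d * \<xi> * OPT m Ps"
          by (simp add: algebra_simps)
        have F4: "(1 - d) * ?B \<le> sqrt (ln (1 / d)) * ?B"
          using one_minus_le_sqrt[OF d0 dlt] B0 by (rule mult_right_mono)
        have F5: "d * \<xi> * OPT m Ps \<ge> 0" using d OPT0 assms by simp
        have F6: "C * (real m ^ 3 / (e * real n)) * sqrt (ln (1 / d)) = sqrt (ln (1 / d)) * ?B" by simp
        show "measure_pmf.expectation (mech e d m Ps) (\<lambda>s. avg_kendall m s Ps)
           \<le> (1 + \<xi>) * OPT m Ps + C * (real m ^ 3 / (e * real n)) * sqrt (ln (1 / d))"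
          unfolding F6 using U F2 F3 F4 F5 by linarith
      qed
    qed
  qed
qed

end
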